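(* Let $\alpha=(\alpha_1,\dots,\alpha_k)$ be a composition of $n$ with $k$ parts. Fix positive integers $i_1<i_2<\dots<i_k$ and consider the set of all words (rearrangements) of the multiset containing $i_j$ with multiplicity $\alpha_j$ for $j=1,\dots,k$ (i.e. words with this fixed content, whose packed content is $\alpha$). Then the number of Sylvester equivalence classes of these words is \[\det\left[\binom{\,j+\sum_{\ell=1}^{i}\alpha_{k+1-\ell}\,}{\,j-(i-1)\,}\right]_{1\le i,j\le k-1}\] (the empty determinant, for $k=1$, being $1$).
   Context: Words are finite sequences of positive integers. The packed content of a word is the composition listing the multiplicities of its distinct letters in increasing order of the letters. Two words $w_1,w_2$ are Sylvester adjacent if there are words $u,v,w$ and letters $a\le b<c$ with $w_1=u\,a\,c\,v\,b\,w$ and $w_2=u\,c\,a\,v\,b\,w$ (concatenation). Sylvester equivalence is the equivalence relation generated by Sylvester adjacency (words $u,v$ are equivalent if there is a chain $u=x_1,x_2,\dots,x_m=v$ with consecutive terms Sylvester adjacent). A binomial coefficient $\binom{N}{r}$ with $r<0$ is $0$. *)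

theory Defs
  imports Main "Jordan_Normal_Form.Determinant"
begin

definition sylv_adj :: "nat list \<Rightarrow> nat list \<Rightarrow> bool" where
  "sylv_adj w1 w2 \<longleftrightarrow> (\<exists>u v w a b c. a \<le> b \<and> b < c \<and>
      w1 = u @ [a, c] @ v @ [b] @ w \<and> w2 = u @ [c, a] @ v @ [b] @ w)"

definition sylv_equiv :: "nat list \<Rightarrow> nat list \<Rightarrow> bool" where
  "sylv_equiv = (\<lambda>x y. sylv_adj x y \<or> sylv_adj y x)\<^sup>*\<^sup>*"

definition words_with_content :: "nat list \<Rightarrow> nat list \<Rightarrow> nat list set" where
  "words_with_content al is = {w. mset w = mset (concat (map2 replicate al is))}"

definition sylv_classes :: "nat list \<Rightarrow> nat list \<Rightarrow> nat list set set" where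
  "sylv_classes al is = words_with_content al is //
     {(u, v). u \<in> words_with_content al is \<and> v \<in> words_with_content al is \<and> sylv_equiv u v}"

definition binom_int :: "nat \<Rightarrow> int \<Rightarrow> int" where
  "binom_int N r = (if r < 0 then 0 else int (N choose nat r))"

text \<open>The (k-1)x(k-1) matrix, 0-based indices i,j standing for i+1, j+1:
  entry binom((j+1) + sum_{l=1}^{i+1} al_{k+1-l}, (j+1) - i), al_m = al!(m-1).\<close>
definition sylv_matrix :: "nat list \<Rightarrow> int mat" where
  "sylv_matrix al = (let k = length al in
     mat (k - 1) (k - 1) (\<lambda>(i, j).
       binom_int (j + 1 + (\<Sum>l\<in>{1..i+1}. al ! (k - l))) (int (j + 1) - int i)))"

end

theory Submission
  imports Defs
begin

datatype tr = Lf | Nd tr nat tr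

function T :: "nat list \<Rightarrow> tr" where
"T w = (if w = [] then Lf else Nd (T (filter (\<lambda>y. y \<le> last w) (butlast w))) (last w)
          (T (filter (\<lambda>y. last w < y) (butlast w))))"
  by pat_completeness auto
termination
  by (relation "measure length") (auto simp: le_less_trans[OF length_filter_le])

declare T.simps[simp del]

lemma T_Nil[simp]: "T [] = Lf" by (subst T.simps) simp
lemma T_snoc[simp]: "T (w@[x]) = Nd (T (filter (\<lambda>y. y \<le> x) w)) x (T (filter (\<lambda>y. x < y) w))"
  by (subst T.simps) simp

lemma adjI: "a \<le> b \<Longrightarrow> b < c \<Longrightarrow> sylv_adj (u @ [a, c] @ v @ [b] @ w) (u @ [c, a] @ v @ [b] @ w)"
  unfolding sylv_adj_def by (intro exI conjI) (assumption | rule refl)+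

lemma adj_T_aux:
  "\<forall>u v a b c. length w = n \<longrightarrow> a \<le> b \<longrightarrow> b < c \<longrightarrow>
     T (u @ [a, c] @ v @ [b] @ w) = T (u @ [c, a] @ v @ [b] @ w)"
proof (induction n arbitrary: w rule: less_induct)
  case (less n)
  show ?case
  proof (intro allI impI)
    fix u v :: "nat list" and a b c :: nat assume len: "length w = n" and ab: "a \<le> b" and bc: "b < c"
    show "T (u @ [a, c] @ v @ [b] @ w) = T (u @ [c, a] @ v @ [b] @ w)"
    proof (cases w rule: rev_exhaust)
      case Nil
      then show ?thesis using ab bc
        using T_snoc[of "u @ [a, c] @ v" b] T_snoc[of "u @ [c, a] @ v" b] by simp
    next
      case (snoc w' x)
      have lt: "length (filter P w') < n" for P
      proof -
        have "length (filter P w') \<le> length w'" by (rule length_filter_le)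
        moreover have "Suc (length w') = n" using len snoc by simp
        ultimately show ?thesis by linarith
      qed
      have e1: "u @ [a, c] @ v @ [b] @ w = (u @ [a, c] @ v @ [b] @ w') @ [x]" using snoc by simp
      have e2: "u @ [c, a] @ v @ [b] @ w = (u @ [c, a] @ v @ [b] @ w') @ [x]" using snoc by simp
      show ?thesis
      proof (cases "c \<le> x")
        case True
        have "T (filter (\<lambda>y. y \<le> x) u @ [a, c] @ filter (\<lambda>y. y \<le> x) v @ [b] @ filter (\<lambda>y. y \<le> x) w')
            = T (filter (\<lambda>y. y \<le> x) u @ [c, a] @ filter (\<lambda>y. y \<le> x) v @ [b] @ filter (\<lambda>y. y \<le> x) w')"
          using less.IH[OF lt, rule_format, OF refl ab bc] .
        then show ?thesis unfolding e1 e2 T_snoc using True ab bc by simp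
      next
        case False
        show ?thesis
        proof (cases "x < a")
          case True
          have "T (filter (\<lambda>y. x < y) u @ [a, c] @ filter (\<lambda>y. x < y) v @ [b] @ filter (\<lambda>y. x < y) w')
            = T (filter (\<lambda>y. x < y) u @ [c, a] @ filter (\<lambda>y. x < y) v @ [b] @ filter (\<lambda>y. x < y) w')"
            using less.IH[OF lt, rule_format, OF refl ab bc] .
          then show ?thesis unfolding e1 e2 T_snoc using True False ab bc by simp
        next
          case False2: False
          then show ?thesis unfolding e1 e2 T_snoc using False by simp
        qed
      qed
    qed
  qed
qed

lemma adj_T: "sylv_adj u v \<Longrightarrow> T u = T v"
proof -
  assume "sylv_adj u v"
  then obtain u0 v0 w0 a b c where "a \<le> b" "b < c" "u = u0 @ [a, c] @ v0 @ [b] @ w0"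
    "v = u0 @ [c, a] @ v0 @ [b] @ w0" unfolding sylv_adj_def by blast
  then show ?thesis using adj_T_aux[of w0 "length w0", rule_format, OF refl \<open>a \<le> b\<close> \<open>b < c\<close>] by simp
qed

lemma equiv_T: "sylv_equiv u v \<Longrightarrow> T u = T v"
  unfolding sylv_equiv_def
  by (induction rule: rtranclp_induct) (auto dest: adj_T)

lemma equiv_refl: "sylv_equiv u u" unfolding sylv_equiv_def by simp

lemma equiv_sym: "sylv_equiv u v \<Longrightarrow> sylv_equiv v u"
  unfolding sylv_equiv_def
proof (induction rule: rtranclp_induct)
  case base then show ?case by simp
next
  case (step y z)
  have "(\<lambda>x y. sylv_adj x y \<or> sylv_adj y x) z y" using step(2) by auto
  then show ?case by (rule converse_rtranclp_into_rtranclp[OF _ step.IH])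
qed

lemma equiv_trans: "sylv_equiv u v \<Longrightarrow> sylv_equiv v w \<Longrightarrow> sylv_equiv u w"
  unfolding sylv_equiv_def by simp

lemma adj_ctx: "sylv_adj u v \<Longrightarrow> sylv_adj (p @ u @ s) (p @ v @ s)"
proof -
  assume "sylv_adj u v"
  then obtain u0 v0 w0 a b c where "a \<le> b" "b < c" "u = u0 @ [a, c] @ v0 @ [b] @ w0"
    "v = u0 @ [c, a] @ v0 @ [b] @ w0" unfolding sylv_adj_def by blast
  then show ?thesis using adjI[of a b c "p @ u0" v0 "w0 @ s"] by simp
qed

lemma equiv_ctx: "sylv_equiv u v \<Longrightarrow> sylv_equiv (p @ u @ s) (p @ v @ s)"
  unfolding sylv_equiv_def
proof (induction rule: rtranclp_induct)
  case base then show ?case by simp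
next
  case (step y z)
  have "(\<lambda>x y. sylv_adj x y \<or> sylv_adj y x) (p @ y @ s) (p @ z @ s)"
    using step(2) adj_ctx[of y z p s] adj_ctx[of z y p s] by blast
  then show ?case using rtranclp.rtrancl_into_rtrancl[OF step.IH] by blast
qed

lemma move_left:
  assumes "z \<le> x" "\<forall>r\<in>set R. x < r"
  shows "sylv_equiv (L @ R @ [z] @ t @ [x]) (L @ [z] @ R @ t @ [x])"
  using assms
proof (induction R arbitrary: t rule: rev_induct)
  case Nil then show ?case by (simp add: equiv_refl)
next
  case (snoc c R')
  have "sylv_adj ((L @ R') @ [z, c] @ t @ [x] @ []) ((L @ R') @ [c, z] @ t @ [x] @ [])"
    using snoc.prems by (intro adjI) auto
  then have 1: "sylv_equiv (L @ (R' @ [c]) @ [z] @ t @ [x]) (L @ R' @ [z] @ (c # t) @ [x])"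
    unfolding sylv_equiv_def by (intro r_into_rtranclp) simp
  have 2: "sylv_equiv (L @ R' @ [z] @ (c # t) @ [x]) (L @ [z] @ R' @ (c # t) @ [x])"
    using snoc.IH[of "c # t"] snoc.prems apply simp
    done
  show ?case using equiv_trans[OF 1 2] by simp
qed

lemma sort_equiv:
  "(\<forall>l\<in>set L. l \<le> x) \<Longrightarrow> (\<forall>r\<in>set R. x < r) \<Longrightarrow>
    sylv_equiv (L @ R @ y @ [x]) (L @ filter (\<lambda>a. a \<le> x) y @ R @ filter (\<lambda>a. x < a) y @ [x])"
proof (induction y arbitrary: L R)
  case Nil then show ?case by (simp add: equiv_refl)
next
  case (Cons z y)
  show ?case
  proof (cases "z \<le> x")
    case True
    have 1: "sylv_equiv (L @ R @ [z] @ y @ [x]) (L @ [z] @ R @ y @ [x])"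
      using move_left[OF True] Cons.prems by blast
    have 2: "sylv_equiv ((L @ [z]) @ R @ y @ [x])
         ((L @ [z]) @ filter (\<lambda>a. a \<le> x) y @ R @ filter (\<lambda>a. x < a) y @ [x])"
      using Cons.IH[of "L @ [z]" R] Cons.prems True by simp
    have 2: "sylv_equiv (L @ [z] @ R @ y @ [x])
         (L @ [z] @ filter (\<lambda>a. a \<le> x) y @ R @ filter (\<lambda>a. x < a) y @ [x])"
      using 2 by simp
    from equiv_trans[OF 1 2] show ?thesis using True apply simp
      done
  next
    case False
    have 2: "sylv_equiv (L @ (R @ [z]) @ y @ [x])
         (L @ filter (\<lambda>a. a \<le> x) y @ (R @ [z]) @ filter (\<lambda>a. x < a) y @ [x])"
      using Cons.IH[of L "R @ [z]"] Cons.prems False by simp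
    then show ?thesis using False by simp
  qed
qed

lemma T_Lf: "T v = Lf \<Longrightarrow> v = []"
  by (cases v rule: rev_exhaust) auto

lemma T_complete_aux: "\<forall>u v. length u = n \<longrightarrow> T u = T v \<longrightarrow> sylv_equiv u v"
proof (induction n rule: less_induct)
  case (less n)
  show ?case
  proof (intro allI impI)
    fix u v :: "nat list" assume len: "length u = n" and eq: "T u = T v"
    show "sylv_equiv u v"
    proof (cases u rule: rev_exhaust)
      case Nil
      then show ?thesis using eq T_Lf[of v] by (simp add: equiv_refl)
    next
      case (snoc u0 x)
      obtain v0 x' where v: "v = v0 @ [x']"
        using eq snoc by (cases v rule: rev_exhaust) auto
      have eq': "Nd (T (filter (\<lambda>y. y \<le> x) u0)) x (T (filter (\<lambda>y. x < y) u0)) =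
          Nd (T (filter (\<lambda>y. y \<le> x') v0)) x' (T (filter (\<lambda>y. x' < y) v0))"
        using eq unfolding snoc v T_snoc .
      then have xx: "x' = x" by simp
      have e1: "T (filter (\<lambda>y. y \<le> x) u0) = T (filter (\<lambda>y. y \<le> x) v0)"
        and e2: "T (filter (\<lambda>y. x < y) u0) = T (filter (\<lambda>y. x < y) v0)"
        using eq' unfolding xx by simp_all
      note v = v[unfolded xx]
      have lt: "length (filter P u0) < n" for P
      proof -
        have "length (filter P u0) \<le> length u0" by (rule length_filter_le)
        moreover have "Suc (length u0) = n" using len snoc by simp
        ultimately show ?thesis by linarith
      qed
      have q1: "sylv_equiv (filter (\<lambda>y. y \<le> x) u0) (filter (\<lambda>y. y \<le> x) v0)"
        using less.IH[OF lt, rule_format, OF refl e1] .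
      have q2: "sylv_equiv (filter (\<lambda>y. x < y) u0) (filter (\<lambda>y. x < y) v0)"
        using less.IH[OF lt, rule_format, OF refl e2] .
      let ?Lu = "filter (\<lambda>y. y \<le> x) u0" and ?Ru = "filter (\<lambda>y. x < y) u0"
      let ?Lv = "filter (\<lambda>y. y \<le> x) v0" and ?Rv = "filter (\<lambda>y. x < y) v0"
      have s1: "sylv_equiv (u0 @ [x]) (?Lu @ ?Ru @ [x])"
        using sort_equiv[of "[]" x "[]" u0] by simp
      have s2: "sylv_equiv (v0 @ [x]) (?Lv @ ?Rv @ [x])"
        using sort_equiv[of "[]" x "[]" v0] by simp
      have m1: "sylv_equiv (?Lu @ ?Ru @ [x]) (?Lv @ ?Ru @ [x])"
        using equiv_ctx[OF q1, of "[]" "?Ru @ [x]"] by simp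
      have m2: "sylv_equiv (?Lv @ ?Ru @ [x]) (?Lv @ ?Rv @ [x])"
        using equiv_ctx[OF q2, of "?Lv" "[x]"] by simp
      show ?thesis unfolding snoc v
        using equiv_trans[OF s1 equiv_trans[OF m1 equiv_trans[OF m2 equiv_sym[OF s2]]]] .
    qed
  qed
qed

lemma equiv_iff_T: "sylv_equiv u v \<longleftrightarrow> T u = T v"
  using T_complete_aux equiv_T by blast


lemma filter_all: "(\<forall>y\<in>#M. P y) \<Longrightarrow> filter_mset P M = M"
  by (simp add: filter_mset_eq_conv)

lemma filter_none: "(\<forall>y\<in>#M. \<not> P y) \<Longrightarrow> filter_mset P M = {#}"
  by simp

definition Tr :: "nat multiset \<Rightarrow> tr set" where
  "Tr M = T ` {w. mset w = M}"

definition NN :: "nat multiset \<Rightarrow> nat" where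
  "NN M = card (Tr M)"

lemma finite_words: "finite {w :: nat list. mset w = M}"
proof -
  have "{w :: nat list. mset w = M} \<subseteq> {w. set w \<subseteq> set_mset M \<and> length w = size M}"
    by auto
  moreover have "finite {w :: nat list. set w \<subseteq> set_mset M \<and> length w = size M}"
    by (rule finite_lists_length_eq) simp
  ultimately show ?thesis by (rule finite_subset)
qed

lemma finite_Tr: "finite (Tr M)"
  unfolding Tr_def using finite_words by simp

lemma Tr_empty: "Tr {#} = {Lf}"
  unfolding Tr_def by auto

definition LL :: "nat \<Rightarrow> nat multiset \<Rightarrow> nat multiset" where
  "LL x M = filter_mset (\<lambda>y. y \<le> x) (M - {#x#})"
definition RR :: "nat \<Rightarrow> nat multiset \<Rightarrow> nat multiset" where
  "RR x M = filter_mset (\<lambda>y. x < y) M"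

lemma Tr_rec:
  assumes "M \<noteq> {#}"
  shows "Tr M = (\<Union>x\<in>set_mset M. (\<lambda>(l, r). Nd l x r) ` (Tr (LL x M) \<times> Tr (RR x M)))"
proof
  show "Tr M \<subseteq> (\<Union>x\<in>set_mset M. (\<lambda>(l, r). Nd l x r) ` (Tr (LL x M) \<times> Tr (RR x M)))"
  proof
    fix t assume "t \<in> Tr M"
    then obtain w where w: "mset w = M" "t = T w" unfolding Tr_def by auto
    then have "w \<noteq> []" using assms by auto
    then obtain w0 x where wx: "w = w0 @ [x]" by (cases w rule: rev_exhaust) auto
    have xM: "x \<in># M" using w wx by auto
    have M: "M = add_mset x (mset w0)" using w wx by simp
    have l: "T (filter (\<lambda>y. y \<le> x) w0) \<in> Tr (LL x M)"
      unfolding Tr_def LL_def M by auto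
    have r: "T (filter (\<lambda>y. x < y) w0) \<in> Tr (RR x M)"
      unfolding Tr_def RR_def M by auto
    have "t = (\<lambda>(l, r). Nd l x r) (T (filter (\<lambda>y. y \<le> x) w0), T (filter (\<lambda>y. x < y) w0))"
      using w wx by simp
    then show "t \<in> (\<Union>x\<in>set_mset M. (\<lambda>(l, r). Nd l x r) ` (Tr (LL x M) \<times> Tr (RR x M)))"
      using l r xM by blast
  qed
next
  show "(\<Union>x\<in>set_mset M. (\<lambda>(l, r). Nd l x r) ` (Tr (LL x M) \<times> Tr (RR x M))) \<subseteq> Tr M"
  proof
    fix t assume "t \<in> (\<Union>x\<in>set_mset M. (\<lambda>(l, r). Nd l x r) ` (Tr (LL x M) \<times> Tr (RR x M)))"
    then obtain x l r where xM: "x \<in># M" and t: "t = Nd l x r"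
      and l: "l \<in> Tr (LL x M)" and r: "r \<in> Tr (RR x M)" by auto
    obtain wl where wl: "mset wl = LL x M" "l = T wl" using l unfolding Tr_def by auto
    obtain wr where wr: "mset wr = RR x M" "r = T wr" using r unfolding Tr_def by auto
    have M: "M = add_mset x (M - {#x#})" using xM by simp
    have sl: "\<forall>y\<in>set wl. y \<le> x"
    proof
      fix y assume "y \<in> set wl"
      then have "y \<in># LL x M" using wl(1) by (metis set_mset_mset)
      then show "y \<le> x" unfolding LL_def by (auto dest: in_diffD)
    qed
    have sr: "\<forall>y\<in>set wr. x < y"
    proof
      fix y assume "y \<in> set wr"
      then have "y \<in># RR x M" using wr(1) by (metis set_mset_mset)
      then show "x < y" unfolding RR_def by simp
    qed
    have RR': "RR x M = filter_mset (\<lambda>y. \<not> y \<le> x) (M - {#x#})"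
      unfolding RR_def by (subst M) (simp add: not_le)
    have "mset (wl @ wr @ [x]) = add_mset x (mset wl + mset wr)" by simp
    also have "\<dots> = add_mset x (M - {#x#})"
      using wl(1) wr(1) multiset_partition[of "M - {#x#}" "\<lambda>y. y \<le> x"] unfolding RR' LL_def by simp
    also have "\<dots> = M" using xM by simp
    finally have "mset (wl @ wr @ [x]) = M" .
    moreover have "T (wl @ wr @ [x]) = t"
    proof -
      have "filter (\<lambda>y. y \<le> x) (wl @ wr) = wl" using sl sr by (auto simp: filter_empty_conv not_le)
      moreover have "filter (\<lambda>y. x < y) (wl @ wr) = wr" using sl sr by (auto simp: filter_empty_conv not_less)
      ultimately show ?thesis using T_snoc[of "wl @ wr" x] t wl wr by simp
    qed
    ultimately show "t \<in> Tr M" unfolding Tr_def by blast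
  qed
qed

lemma NN_rec:
  assumes "M \<noteq> {#}"
  shows "NN M = (\<Sum>x\<in>set_mset M. NN (LL x M) * NN (RR x M))"
proof -
  have "NN M = card (\<Union>x\<in>set_mset M. (\<lambda>(l, r). Nd l x r) ` (Tr (LL x M) \<times> Tr (RR x M)))"
    unfolding NN_def using Tr_rec[OF assms] by simp
  also have "\<dots> = (\<Sum>x\<in>set_mset M. card ((\<lambda>(l, r). Nd l x r) ` (Tr (LL x M) \<times> Tr (RR x M))))"
    by (rule card_UN_disjoint) (auto simp: finite_Tr)
  also have "\<dots> = (\<Sum>x\<in>set_mset M. NN (LL x M) * NN (RR x M))"
  proof (rule sum.cong[OF refl])
    fix x
    have "inj_on (\<lambda>(l, r). Nd l x r) (Tr (LL x M) \<times> Tr (RR x M))"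
      by (auto simp: inj_on_def)
    then show "card ((\<lambda>(l, r). Nd l x r) ` (Tr (LL x M) \<times> Tr (RR x M))) = NN (LL x M) * NN (RR x M)"
      unfolding NN_def by (simp add: card_image card_cartesian_product)
  qed
  finally show ?thesis .
qed

lemma NN_empty: "NN {#} = 1"
  unfolding NN_def Tr_empty by simp

lemma NN_rep: "NN (replicate_mset n y) = 1"
proof (induction n)
  case 0 then show ?case by (simp add: NN_empty)
next
  case (Suc n)
  have L: "LL y (replicate_mset (Suc n) y) = replicate_mset n y"
    unfolding LL_def by (induction n) auto
  have R: "RR y (replicate_mset (Suc n) y) = {#}"
    unfolding RR_def by (induction n) auto
  have s: "set_mset (replicate_mset (Suc n) y) = {y}" by simp
  have "NN (replicate_mset (Suc n) y) = NN (LL y (replicate_mset (Suc n) y)) * NN (RR y (replicate_mset (Suc n) y))"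
    using NN_rec[of "replicate_mset (Suc n) y"] unfolding s by simp
  then show ?case unfolding L R Suc.IH NN_empty by simp
qed

lemma classes_card:
  "card (sylv_classes al is) = NN (mset (concat (map2 replicate al is)))"
proof -
  let ?W = "words_with_content al is"
  let ?M = "mset (concat (map2 replicate al is))"
  have W: "?W = {w. mset w = ?M}" unfolding words_with_content_def by simp
  have rel: "{(u, v). u \<in> ?W \<and> v \<in> ?W \<and> sylv_equiv u v} = {(u, v). u \<in> ?W \<and> v \<in> ?W \<and> T u = T v}"
    using equiv_iff_T by blast
  have q: "?W // {(u, v). u \<in> ?W \<and> v \<in> ?W \<and> T u = T v} = (\<lambda>t. {w \<in> ?W. T w = t}) ` (T ` ?W)"
  proof -
    have "{(u, v). u \<in> ?W \<and> v \<in> ?W \<and> T u = T v} `` {x} = {w \<in> ?W. T w = T x}" if "x \<in> ?W" for x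
      using that by auto
    then have "?W // {(u, v). u \<in> ?W \<and> v \<in> ?W \<and> T u = T v} = (\<lambda>x. {w \<in> ?W. T w = T x}) ` ?W"
      unfolding quotient_def by auto
    then show ?thesis by (simp add: image_image)
  qed
  have inj: "inj_on (\<lambda>t. {w \<in> ?W. T w = t}) (T ` ?W)"
    by (auto simp: inj_on_def)
  have "card (sylv_classes al is) = card (T ` ?W)"
    unfolding sylv_classes_def rel q using card_image[OF inj] .
  then show ?thesis unfolding NN_def Tr_def W .
qed


definition FF :: "nat multiset \<Rightarrow> nat multiset \<Rightarrow> nat" where
  "FF A C = (\<Sum>x\<in>set_mset A. NN (LL x A) * NN (RR x A + C))"

lemma R_split:
  assumes sep: "\<forall>a\<in>#A. \<forall>c\<in>#C. a < c" and ne: "A + C \<noteq> {#}"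
  shows "NN (A + C) = FF A C + (\<Sum>x\<in>set_mset C. NN (A + LL x C) * NN (RR x C))"
proof -
  have disj: "set_mset A \<inter> set_mset C = {}" using sep by fastforce
  have "NN (A + C) = (\<Sum>x\<in>set_mset A \<union> set_mset C. NN (LL x (A + C)) * NN (RR x (A + C)))"
    using NN_rec[OF ne] by simp
  also have "\<dots> = (\<Sum>x\<in>set_mset A. NN (LL x (A + C)) * NN (RR x (A + C)))
      + (\<Sum>x\<in>set_mset C. NN (LL x (A + C)) * NN (RR x (A + C)))"
    by (rule sum.union_disjoint) (use disj in auto)
  also have "(\<Sum>x\<in>set_mset A. NN (LL x (A + C)) * NN (RR x (A + C))) = FF A C"
    unfolding FF_def
  proof (rule sum.cong[OF refl])
    fix x assume xA: "x \<in> set_mset A"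
    then obtain A' where A': "A = add_mset x A'" by (meson multi_member_split)
    have c: "\<forall>c\<in>#C. x < c" using sep xA by auto
    have "LL x (A + C) = LL x A"
      unfolding LL_def A' using c by (auto intro!: filter_none)
    moreover have "RR x (A + C) = RR x A + C"
      unfolding RR_def using c by (simp add: filter_all)
    ultimately show "NN (LL x (A + C)) * NN (RR x (A + C)) = NN (LL x A) * NN (RR x A + C)" by simp
  qed
  also have "(\<Sum>x\<in>set_mset C. NN (LL x (A + C)) * NN (RR x (A + C))) =
      (\<Sum>x\<in>set_mset C. NN (A + LL x C) * NN (RR x C))"
  proof (rule sum.cong[OF refl])
    fix x assume xC: "x \<in> set_mset C"
    then obtain C' where C': "C = add_mset x C'" by (meson multi_member_split)
    have a: "\<forall>a\<in>#A. a < x" using sep xC by auto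
    have "LL x (A + C) = A + LL x C"
      unfolding LL_def C' using a by (auto intro!: filter_all)
    moreover have "RR x (A + C) = RR x C"
      unfolding RR_def using a by (auto intro!: filter_none)
    ultimately show "NN (LL x (A + C)) * NN (RR x (A + C)) = NN (A + LL x C) * NN (RR x C)" by simp
  qed
  finally show ?thesis .
qed

lemma filter_rep: "filter_mset P (replicate_mset n x) = (if P x then replicate_mset n x else {#})"
  by (induction n) auto

lemma R_one:
  assumes "\<forall>a\<in>#A. a < y" "n \<ge> 1"
  shows "NN (A + replicate_mset n y) = FF A (replicate_mset n y) + NN (A + replicate_mset (n - 1) y)"
proof -
  obtain n' where n: "n = Suc n'" using assms(2) by (cases n) auto
  have s: "set_mset (replicate_mset n y) = {y}" using n by simp
  have L: "LL y (replicate_mset n y) = replicate_mset (n - 1) y"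
    unfolding LL_def n by (induction n') auto
  have R: "RR y (replicate_mset n y) = {#}"
    unfolding RR_def n by (induction n') auto
  have "NN (A + replicate_mset n y) = FF A (replicate_mset n y) +
      (\<Sum>x\<in>set_mset (replicate_mset n y). NN (A + LL x (replicate_mset n y)) * NN (RR x (replicate_mset n y)))"
    by (rule R_split) (use assms n in auto)
  then show ?thesis unfolding s by (simp add: NN_empty L R)
qed

lemma R_two:
  assumes "\<forall>a\<in>#A. a < y" "y < z" "p \<ge> 1" "q \<ge> 1"
  shows "NN (A + (replicate_mset p y + replicate_mset q z)) = FF A (replicate_mset p y + replicate_mset q z)
     + NN (A + replicate_mset (p - 1) y) + NN (A + (replicate_mset p y + replicate_mset (q - 1) z))"
proof -
  obtain p' where p: "p = Suc p'" using assms(3) by (cases p) auto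
  obtain q' where q: "q = Suc q'" using assms(4) by (cases q) auto
  let ?C = "replicate_mset p y + replicate_mset q z"
  have s: "set_mset ?C = {y, z}" using p q by auto
  have Ly: "LL y ?C = replicate_mset (p - 1) y"
    unfolding LL_def p q using assms(2) by (simp add: filter_rep)
  have Ry: "RR y ?C = replicate_mset q z"
    unfolding RR_def p q using assms(2) by (simp add: filter_rep)
  have Lz: "LL z ?C = replicate_mset p y + replicate_mset (q - 1) z"
    unfolding LL_def p q using assms(2) by (simp add: filter_rep)
  have Rz: "RR z ?C = {#}"
    unfolding RR_def p q using assms(2) by (simp add: filter_rep)
  have "NN (A + ?C) = FF A ?C + (\<Sum>x\<in>set_mset ?C. NN (A + LL x ?C) * NN (RR x ?C))"
    by (rule R_split) (use assms p q in auto)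
  also have "(\<Sum>x\<in>set_mset ?C. NN (A + LL x ?C) * NN (RR x ?C)) =
     NN (A + LL y ?C) * NN (RR y ?C) + NN (A + LL z ?C) * NN (RR z ?C)"
    unfolding s using assms(2) by simp
  finally show ?thesis unfolding Ly Ry Lz Rz by (simp add: NN_rep NN_empty)
qed

lemma size_RR: "x \<in># A \<Longrightarrow> size (RR x A) < size A"
proof -
  assume "x \<in># A"
  then obtain A' where A': "A = add_mset x A'" by (meson multi_member_split)
  have "size (RR x A) = size (filter_mset (\<lambda>y. x < y) A')" unfolding RR_def A' by simp
  also have "\<dots> \<le> size A'" by simp
  finally show ?thesis unfolding A' by simp
qed

lemma RR_sub: "a \<in># RR x A \<Longrightarrow> a \<in># A"
  unfolding RR_def by simp

lemma S_N_aux: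
  assumes yz: "y < z"
  shows "\<forall>A p q. size A + p + q = n \<longrightarrow> (\<forall>a\<in>#A. a < y) \<longrightarrow> p \<ge> 1 \<longrightarrow> q \<ge> 1 \<longrightarrow>
    NN (A + (replicate_mset p y + replicate_mset q z)) = NN (A + replicate_mset (p + q) y)
      + NN (A + (replicate_mset p y + replicate_mset (q - 1) z))"
proof (induction n rule: less_induct)
  case (less n)
  show ?case
  proof (intro allI impI)
    fix A :: "nat multiset" and p q :: nat
    assume sz: "size A + p + q = n" and Ay: "\<forall>a\<in>#A. a < y" and p1: "p \<ge> 1" and q1: "q \<ge> 1"
    let ?Y = "replicate_mset p y"
    have FF_split: "FF A (?Y + replicate_mset q' z) = FF A (replicate_mset (p + q') y)
        + FF A (?Y + replicate_mset (q' - 1) z)" if "q' \<ge> 1" "q' \<le> q" for q'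
    proof -
      have "FF A (?Y + replicate_mset q' z) = (\<Sum>x\<in>set_mset A. NN (LL x A) * NN (RR x A + replicate_mset (p + q') y)
          + NN (LL x A) * NN (RR x A + (?Y + replicate_mset (q' - 1) z)))"
        unfolding FF_def
      proof (rule sum.cong[OF refl])
        fix x assume xA: "x \<in> set_mset A"
        have lt: "size (RR x A) + p + q' < n" using size_RR[of x A] xA sz that by simp
        have "NN (RR x A + (?Y + replicate_mset q' z)) = NN (RR x A + replicate_mset (p + q') y)
            + NN (RR x A + (?Y + replicate_mset (q' - 1) z))"
          using less.IH[OF lt, rule_format, OF refl _ p1 that(1)] Ay RR_sub by blast
        then show "NN (LL x A) * NN (RR x A + (?Y + replicate_mset q' z)) =
          NN (LL x A) * NN (RR x A + replicate_mset (p + q') y) + NN (LL x A) * NN (RR x A + (?Y + replicate_mset (q' - 1) z))"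
          by (simp add: algebra_simps)
      qed
      then show ?thesis unfolding FF_def by (simp add: sum.distrib)
    qed
    have two: "NN (A + (?Y + replicate_mset q z)) = FF A (?Y + replicate_mset q z)
       + NN (A + replicate_mset (p - 1) y) + NN (A + (?Y + replicate_mset (q - 1) z))"
      by (rule R_two[OF Ay yz p1 q1])
    have one: "NN (A + replicate_mset (p + q) y) = FF A (replicate_mset (p + q) y)
        + NN (A + replicate_mset (p + q - 1) y)"
      by (rule R_one) (use Ay p1 in auto)
    show "NN (A + (?Y + replicate_mset q z)) = NN (A + replicate_mset (p + q) y)
      + NN (A + (?Y + replicate_mset (q - 1) z))"
    proof (cases "q = 1")
      case True
      have one': "NN (A + ?Y) = FF A ?Y + NN (A + replicate_mset (p - 1) y)"
        by (rule R_one) (use Ay p1 in auto)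
      have "FF A (?Y + replicate_mset q z) = FF A (replicate_mset (p + q) y) + FF A ?Y"
        using FF_split[of q] q1 True by simp
      then show ?thesis using two one one' True by simp
    next
      case False
      then have q2: "q - 1 \<ge> 1" using q1 by simp
      have two': "NN (A + (?Y + replicate_mset (q - 1) z)) = FF A (?Y + replicate_mset (q - 1) z)
       + NN (A + replicate_mset (p - 1) y) + NN (A + (?Y + replicate_mset (q - 1 - 1) z))"
        by (rule R_two[OF Ay yz p1 q2])
      have lt: "size A + p + (q - 1) < n" using sz q1 by simp
      have ih: "NN (A + (?Y + replicate_mset (q - 1) z)) = NN (A + replicate_mset (p + (q - 1)) y)
        + NN (A + (?Y + replicate_mset (q - 1 - 1) z))"
        using less.IH[OF lt, rule_format, OF refl _ p1 q2] Ay by blast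
      have "FF A (?Y + replicate_mset q z) = FF A (replicate_mset (p + q) y) + FF A (?Y + replicate_mset (q - 1) z)"
        using FF_split[of q] q1 by simp
      moreover have "p + (q - 1) = p + q - 1" using q1 by simp
      ultimately show ?thesis using two one two' ih by simp
    qed
  qed
qed


definition Mg :: "nat \<Rightarrow> (nat \<Rightarrow> nat) \<Rightarrow> int mat" where
  "Mg m s = mat m m (\<lambda>(i, j). binom_int (j + 1 + s i) (int (j + 1) - int i))"

definition Mp :: "nat \<Rightarrow> (nat \<Rightarrow> nat) \<Rightarrow> int mat" where
  "Mp m s = mat m m (\<lambda>(i, j). binom_int (j + s i) (int (j + 1) - int i))"

definition Ud :: "nat \<Rightarrow> int mat" where
  "Ud m = mat m m (\<lambda>(i, j). if i = j then 1 else if Suc i = j then -1 else 0)"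

lemma binom_pascal: "binom_int (Suc n) (r + 1) = binom_int n (r + 1) + binom_int n r"
proof (cases "r < -1")
  case True then show ?thesis unfolding binom_int_def by simp
next
  case False
  show ?thesis
  proof (cases "r = -1")
    case True then show ?thesis unfolding binom_int_def by simp
  next
    case False2: False
    then have "r \<ge> 0" using False by simp
    then obtain k where k: "r = int k" using nonneg_int_cases by blast
    have "nat (int k + 1) = Suc k" by simp
    then show ?thesis unfolding binom_int_def k by simp
  qed
qed

lemma Mg_carrier: "Mg m s \<in> carrier_mat m m" unfolding Mg_def by simp
lemma Mp_carrier: "Mp m s \<in> carrier_mat m m" unfolding Mp_def by simp
lemma Ud_carrier: "Ud m \<in> carrier_mat m m" unfolding Ud_def by simp

lemma dims_M[simp]: "dim_row (Mg m s) = m" "dim_col (Mg m s) = m" "dim_row (Mp m s) = m" "dim_col (Mp m s) = m"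
  "dim_row (Ud m) = m" "dim_col (Ud m) = m"
  by (simp_all add: Mg_def Mp_def Ud_def)

lemma det_Ud: "det (Ud m) = 1"
proof -
  have ut: "upper_triangular (Ud m)" unfolding upper_triangular_def Ud_def by auto
  have "diag_mat (Ud m) = map (\<lambda>x. 1) [0..<m]" unfolding diag_mat_def
    by (rule map_cong) (auto simp: Ud_def)
  then have "diag_mat (Ud m) = replicate m 1" by (simp add: map_replicate_const)
  then show ?thesis using det_upper_triangular[OF ut Ud_carrier] by simp
qed

lemma sum_Ud:
  fixes f :: "nat \<Rightarrow> int"
  assumes "j < m"
  shows "(\<Sum>k\<in>{0..<m}. f k * (if k = j then 1 else if Suc k = j then -1 else 0)) =
    f j - (if j > 0 then f (j - 1) else 0)"
proof -
  have "(\<Sum>k\<in>{0..<m}. f k * (if k = j then 1 else if Suc k = j then -1 else 0)) =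
     (\<Sum>k\<in>{0..<m}. (if k = j then f k else 0) - (if 0 < j \<and> k = j - 1 then f k else 0))"
    by (rule sum.cong[OF refl]) auto
  also have "\<dots> = f j - (if j > 0 then f (j - 1) else 0)"
    using assms by (simp add: sum_subtractf)
  finally show ?thesis .
qed

lemma prod_entry:
  assumes "i < m" "j < m"
  shows "(Mg m s * Ud m) $$ (i, j) = Mp m s $$ (i, j) + (if i = 0 \<and> j = 0 then 1 else 0)"
proof -
  have "(Mg m s * Ud m) $$ (i, j) = (\<Sum>k\<in>{0..<m}. Mg m s $$ (i, k) * (if k = j then 1 else if Suc k = j then -1 else 0))"
    using assms unfolding Ud_def by (simp add: Mg_def scalar_prod_def)
  also have "\<dots> = Mg m s $$ (i, j) - (if j > 0 then Mg m s $$ (i, j - 1) else 0)"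
    by (rule sum_Ud[OF assms(2)])
  also have "\<dots> = Mp m s $$ (i, j) + (if i = 0 \<and> j = 0 then 1 else 0)"
  proof (cases "j = 0")
    case True
    have "binom_int (Suc (s i)) (int 0 - int i + 1) = binom_int (s i) (int 0 - int i + 1) + binom_int (s i) (int 0 - int i)"
      by (rule binom_pascal)
    moreover have "binom_int (s i) (int 0 - int i) = (if i = 0 then 1 else 0)"
      unfolding binom_int_def by simp
    ultimately show ?thesis using True assms unfolding Mg_def Mp_def by (simp add: algebra_simps)
  next
    case False
    have "binom_int (Suc (j + s i)) (int j - int i + 1) = binom_int (j + s i) (int j - int i + 1) + binom_int (j + s i) (int j - int i)"
      by (rule binom_pascal)
    moreover have "j - 1 + 1 + s i = j + s i" "int (j - 1 + 1) - int i = int j - int i" using False by auto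
    ultimately show ?thesis using False assms unfolding Mg_def Mp_def by (simp add: algebra_simps)
  qed
  finally show ?thesis .
qed

lemma key_det:
  assumes m: "m \<ge> 1"
  shows "det (Mg m s) = det (Mp m s) + det (Mg (m - 1) (\<lambda>i. s (Suc i)))"
proof -
  let ?N = "Mg m s * Ud m"
  have Nc: "?N \<in> carrier_mat m m" using Mg_carrier Ud_carrier by (metis mult_carrier_mat)
  have "det ?N = det (Mg m s)" using det_mult[OF Mg_carrier Ud_carrier] det_Ud by simp
  have del: "mat_delete ?N 0 j = mat_delete (Mp m s) 0 j" if "j < m" for j
  proof (rule eq_matI)
    fix i' j' assume "i' < dim_row (mat_delete (Mp m s) 0 j)" "j' < dim_col (mat_delete (Mp m s) 0 j)"
    then have ij: "i' < m - 1" "j' < m - 1" by auto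
    have "?N $$ (Suc i', if j' < j then j' else Suc j') = Mp m s $$ (Suc i', if j' < j then j' else Suc j')"
      using prod_entry[of "Suc i'" m "if j' < j then j' else Suc j'" s] ij that by auto
    then show "mat_delete ?N 0 j $$ (i', j') = mat_delete (Mp m s) 0 j $$ (i', j')"
      unfolding mat_delete_def using ij by simp
  qed (use Nc in \<open>auto simp: Mp_def\<close>)
  have "det ?N = (\<Sum>j<m. ?N $$ (0, j) * cofactor ?N 0 j)"
    using laplace_expansion_row[OF Nc] m by simp
  also have "\<dots> = (\<Sum>j<m. Mp m s $$ (0, j) * cofactor (Mp m s) 0 j + (if j = 0 then cofactor (Mp m s) 0 j else 0))"
  proof (rule sum.cong[OF refl])
    fix j assume "j \<in> {..<m}"
    then have j: "j < m" by simp
    have "cofactor ?N 0 j = cofactor (Mp m s) 0 j" unfolding cofactor_def using del[OF j] by simp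
    then show "?N $$ (0, j) * cofactor ?N 0 j = Mp m s $$ (0, j) * cofactor (Mp m s) 0 j + (if j = 0 then cofactor (Mp m s) 0 j else 0)"
      using prod_entry[OF _ j, of 0 s] m by (simp add: algebra_simps)
  qed
  also have "\<dots> = det (Mp m s) + cofactor (Mp m s) 0 0"
    using laplace_expansion_row[OF Mp_carrier, of 0 m s] m by (simp add: sum.distrib)
  also have "cofactor (Mp m s) 0 0 = det (Mg (m - 1) (\<lambda>i. s (Suc i)))"
  proof -
    have "mat_delete (Mp m s) 0 0 = Mg (m - 1) (\<lambda>i. s (Suc i))"
    proof (rule eq_matI)
      fix i' j' assume "i' < dim_row (Mg (m - 1) (\<lambda>i. s (Suc i)))" "j' < dim_col (Mg (m - 1) (\<lambda>i. s (Suc i)))"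
      then have "i' < m - 1" "j' < m - 1" by (auto simp: Mg_def)
      then show "mat_delete (Mp m s) 0 0 $$ (i', j') = Mg (m - 1) (\<lambda>i. s (Suc i)) $$ (i', j')"
        unfolding mat_delete_def Mp_def Mg_def by simp
    qed (auto simp: Mp_def Mg_def)
    then show ?thesis unfolding cofactor_def by simp
  qed
  finally show ?thesis using \<open>det ?N = det (Mg m s)\<close> by simp
qed

lemma Mp_shift: "(\<forall>i<m. s i \<ge> 1) \<Longrightarrow> Mp m s = Mg m (\<lambda>i. s i - 1)"
  unfolding Mp_def Mg_def by (rule eq_matI) auto

lemma Mp_zero:
  assumes "m \<ge> 1" "s 0 = 0"
  shows "det (Mp m s) = 0"
proof -
  have "det (Mp m s) = (\<Sum>j<m. Mp m s $$ (0, j) * cofactor (Mp m s) 0 j)"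
    using laplace_expansion_row[OF Mp_carrier, of 0 m s] assms by simp
  also have "\<dots> = 0"
    by (rule sum.neutral) (use assms in \<open>auto simp: Mp_def binom_int_def\<close>)
  finally show ?thesis .
qed


definition Dr :: "nat list \<Rightarrow> int" where
  "Dr r = det (Mg (length r - 1) (\<lambda>i. sum_list (take (Suc i) r)))"

lemma Dr_single: "Dr [a] = 1"
  unfolding Dr_def using Mg_carrier[of 0] by simp

lemma Dr_rec: "Dr (q # p # t) = (if q = 0 then 0 else Dr ((q - 1) # p # t)) + Dr ((p + q) # t)"
proof -
  let ?s = "\<lambda>i. sum_list (take (Suc i) (q # p # t))"
  have m: "length (q # p # t) - 1 \<ge> 1" by simp
  have k: "det (Mg (length (q # p # t) - 1) ?s) = det (Mp (length (q # p # t) - 1) ?s)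
     + det (Mg (length (q # p # t) - 1 - 1) (\<lambda>i. ?s (Suc i)))"
    by (rule key_det[OF m])
  have tl: "(\<lambda>i. ?s (Suc i)) = (\<lambda>i. sum_list (take (Suc i) ((p + q) # t)))"
    by (rule ext) simp
  have d2: "det (Mg (length (q # p # t) - 1 - 1) (\<lambda>i. ?s (Suc i))) = Dr ((p + q) # t)"
    unfolding Dr_def tl by simp
  have d1: "det (Mp (length (q # p # t) - 1) ?s) = (if q = 0 then 0 else Dr ((q - 1) # p # t))"
  proof (cases "q = 0")
    case True
    then show ?thesis using Mp_zero[OF m, of ?s] by simp
  next
    case False
    have "Mp (length (q # p # t) - 1) ?s = Mg (length (q # p # t) - 1) (\<lambda>i. ?s i - 1)"
      by (rule Mp_shift) (use False in auto)
    moreover have "(\<lambda>i. ?s i - 1) = (\<lambda>i. sum_list (take (Suc i) ((q - 1) # p # t)))"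
      by (rule ext) (use False in simp)
    ultimately show ?thesis using False unfolding Dr_def by simp
  qed
  show ?thesis using k d1 d2 unfolding Dr_def[of "q # p # t"] by simp
qed

lemma set_concat_map2: "set (concat (map2 replicate r js)) \<subseteq> set js"
  by (auto dest: set_zip_rightD)

lemma main_ind:
  "\<forall>r js. sum_list r + length r = n \<longrightarrow> r \<noteq> [] \<longrightarrow> length js = length r \<longrightarrow>
     sorted_wrt (>) js \<longrightarrow> (\<forall>x\<in>set (tl r). x > 0) \<longrightarrow>
     int (NN (mset (concat (map2 replicate r js)))) = Dr r"
proof (induction n rule: less_induct)
  case (less n)
  show ?case
  proof (intro allI impI)
    fix r js :: "nat list"
    assume sz: "sum_list r + length r = n" and ne: "r \<noteq> []" and len: "length js = length r"
      and sorted: "sorted_wrt (>) js" and pos: "\<forall>x\<in>set (tl r). x > 0"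
    show "int (NN (mset (concat (map2 replicate r js)))) = Dr r"
    proof (cases r)
      case Nil then show ?thesis using ne by simp
    next
      case (Cons q r1)
      show ?thesis
      proof (cases r1)
        case Nil
        then obtain j where "js = [j]" using len Cons by (cases js) auto
        then show ?thesis using Cons Nil by (simp add: NN_rep Dr_single)
      next
        case (Cons p t)
        note r = \<open>r = q # r1\<close>[unfolded Cons]
        obtain z y js' where js: "js = z # y # js'" using len r
          by (cases js; cases "tl js") auto
        have lent: "length js' = length t" using len r js by simp
        have yz: "y < z" and sy: "sorted_wrt (>) (y # js')" and ya: "\<forall>j\<in>set js'. j < y"
          using sorted js by auto
        have p1: "p \<ge> 1" using pos r by simp
        have post: "\<forall>x\<in>set t. x > 0" using pos r by simp
        let ?A = "mset (concat (map2 replicate t js'))"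
        have Ay: "\<forall>a\<in>#?A. a < y" using set_concat_map2[of t js'] ya by auto
        have M: "mset (concat (map2 replicate r js)) = ?A + (replicate_mset p y + replicate_mset q z)"
          unfolding r js by (simp add: add_ac)
        show ?thesis
        proof (cases "q = 0")
          case True
          have lt: "sum_list (p # t) + length (p # t) < n" using sz r by simp
          have "int (NN (mset (concat (map2 replicate (p # t) (y # js'))))) = Dr (p # t)"
            using less.IH[OF lt, rule_format, OF refl, of "y # js'"] lent post sy by simp
          moreover have "mset (concat (map2 replicate r js)) = mset (concat (map2 replicate (p # t) (y # js')))"
            unfolding r js True by simp
          ultimately show ?thesis unfolding r using Dr_rec[of 0 p t] True by simp
        next
          case False
          then have q1: "q \<ge> 1" by simp
          have S: "NN (?A + (replicate_mset p y + replicate_mset q z)) = NN (?A + replicate_mset (p + q) y)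
            + NN (?A + (replicate_mset p y + replicate_mset (q - 1) z))"
            using S_N_aux[OF yz, rule_format, OF refl _ p1 q1] Ay by blast
          have lt1: "sum_list ((p + q) # t) + length ((p + q) # t) < n" using sz r by simp
          have i1: "int (NN (mset (concat (map2 replicate ((p + q) # t) (y # js'))))) = Dr ((p + q) # t)"
            using less.IH[OF lt1, rule_format, OF refl, of "y # js'"] lent post sy by simp
          have lt2: "sum_list ((q - 1) # p # t) + length ((q - 1) # p # t) < n" using sz r q1 by simp
          have i2: "int (NN (mset (concat (map2 replicate ((q - 1) # p # t) (z # y # js'))))) = Dr ((q - 1) # p # t)"
            by (rule less.IH[OF lt2, rule_format, OF refl]) (use lent post p1 sorted js in auto)
          have e1: "mset (concat (map2 replicate ((p + q) # t) (y # js'))) = ?A + replicate_mset (p + q) y"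
            by (simp add: add_ac)
          have e2: "mset (concat (map2 replicate ((q - 1) # p # t) (z # y # js'))) =
              ?A + (replicate_mset p y + replicate_mset (q - 1) z)"
            by (simp add: add_ac)
          have f1: "int (NN (?A + replicate_mset (p + q) y)) = Dr ((p + q) # t)" using i1 unfolding e1 .
          have f2: "int (NN (?A + (replicate_mset p y + replicate_mset (q - 1) z))) = Dr ((q - 1) # p # t)"
            using i2 unfolding e2 .
          show ?thesis unfolding M S of_nat_add f1 f2 unfolding r Dr_rec[of q p t] using False by simp
        qed
      qed
    qed
  qed
qed

lemma mset_concat_rev: "mset (concat (rev L)) = mset (concat L)"
  by (induction L) auto

lemma sum_take_rev:
  assumes "i < length al"
  shows "(\<Sum>l\<in>{1..i+1}. al ! (length al - l)) = sum_list (take (Suc i) (rev al))"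
proof -
  have "sum_list (take (Suc i) (rev al)) = (\<Sum>l = 0..<Suc i. take (Suc i) (rev al) ! l)"
  proof -
    have len: "length (take (Suc i) (rev al)) = Suc i" using assms by simp
    show ?thesis by (subst sum_list_sum_nth) (simp only: len)
  qed
  also have "\<dots> = (\<Sum>l = 0..<Suc i. al ! (length al - Suc l))"
    by (rule sum.cong[OF refl]) (use assms in \<open>auto simp: rev_nth\<close>)
  also have "\<dots> = (\<Sum>l\<in>{1..i+1}. al ! (length al - l))"
    using sum.shift_bounds_cl_Suc_ivl[of "\<lambda>l. al ! (length al - l)" 0 i]
    by (simp add: atLeastLessThanSuc_atLeastAtMost)
  finally show ?thesis by simp
qed

theorem theorem4p2:
  fixes al "is" :: "nat list" and n k :: nat
  assumes "length al = k" and "k \<ge> 1"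
    and "\<forall>a\<in>set al. a > 0" and "sum_list al = n"
    and "length is = k" and "sorted_wrt (<) is" and "\<forall>x\<in>set is. x > 0"
  shows "int (card (sylv_classes al is)) = det (sylv_matrix al)"
proof -
  have M: "mset (concat (map2 replicate al is)) = mset (concat (map2 replicate (rev al) (rev is)))"
    using assms(1,5) by (simp add: zip_rev rev_map[symmetric] mset_concat_rev)
  have "int (card (sylv_classes al is)) = Dr (rev al)"
    unfolding classes_card M
  proof (rule main_ind[rule_format, OF refl])
    show "rev al \<noteq> []" using assms(1,2) by auto
    show "length (rev is) = length (rev al)" using assms(1,5) by simp
    show "sorted_wrt (>) (rev is)" using assms(6) by (simp add: sorted_wrt_rev)
    have "set (tl (rev al)) \<subseteq> set al"
      by (metis list.set_sel(2) set_rev tl_Nil subsetI)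
    then show "\<And>x. x \<in> set (tl (rev al)) \<Longrightarrow> x > 0" using assms(3) by auto
  qed
  also have "Dr (rev al) = det (sylv_matrix al)"
  proof -
    have "sylv_matrix al = Mg (length (rev al) - 1) (\<lambda>i. sum_list (take (Suc i) (rev al)))"
    proof (rule eq_matI)
      fix i j assume "i < dim_row (Mg (length (rev al) - 1) (\<lambda>i. sum_list (take (Suc i) (rev al))))"
        "j < dim_col (Mg (length (rev al) - 1) (\<lambda>i. sum_list (take (Suc i) (rev al))))"
      then have i: "i < length al - 1" "j < length al - 1" by simp_all
      have e: "(\<Sum>l\<in>{1..i+1}. al ! (length al - l)) = sum_list (take (Suc i) (rev al))"
        using i by (intro sum_take_rev) simp
      have "sylv_matrix al $$ (i, j) = binom_int (j + 1 + (\<Sum>l\<in>{1..i+1}. al ! (length al - l))) (int (j + 1) - int i)"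
        unfolding sylv_matrix_def Let_def using i by simp
      also have "\<dots> = binom_int (j + 1 + sum_list (take (Suc i) (rev al))) (int (j + 1) - int i)"
        unfolding e ..
      also have "\<dots> = Mg (length (rev al) - 1) (\<lambda>i. sum_list (take (Suc i) (rev al))) $$ (i, j)"
        unfolding Mg_def using i by simp
      finally show "sylv_matrix al $$ (i, j) = Mg (length (rev al) - 1) (\<lambda>i. sum_list (take (Suc i) (rev al))) $$ (i, j)" .
    qed (simp_all add: sylv_matrix_def Let_def)
    then show ?thesis unfolding Dr_def by simp
  qed
  finally show ?thesis .
qed

end
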